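(* Let $\rho=\sum_{i=1}^n P_i|e_i\rangle\langle e_i|$ be a state with finite energies $E_1,\dots,E_n$. Let $Z=\sum_i e^{-E_i/kT}$ and $A_i=e^{-E_i/kT}/Z$, and let $\sigma^T=\sum_i A_i|e_i\rangle\langle e_i|$ be the Gibbs state on the same energy levels. Then for every $\varepsilon\in[0,1)$, $$W^\varepsilon(\rho\to\sigma^T)=kT\ln 2\; D_0^\varepsilon(\rho\|\sigma^T).$$
   Context: Conventions. The constants $k>0$ (Boltzmann's constant) and $T>0$ (temperature) are fixed. A state is a finite-level system with energies $E_1,\dots,E_d\in\mathbb{R}\cup\{+\infty\}$, not all $+\infty$, together with a diagonal density matrix $\rho=\sum_i\lambda_i|e_i\rangle\langle e_i|$. Equivalently, it is a probability vector $(\lambda_i)$ over the levels, and we require $\lambda_i=0$ whenever $E_i=+\infty$. Gibbs rescaling. $G^T(\rho)$ is the function on $[0,\infty)$ built as follows. Each level $i$ with $E_i<\infty$ is represented by a block: an interval of length $e^{-E_i/kT}$ on which the function takes the constant value $\lambda_i e^{E_i/kT}$, so the block has area $\lambda_i$. The blocks are placed consecutively starting at $0$, in order of nonincreasing height. The function is $0$ beyond $Z=\sum_{i:E_i<\infty}e^{-E_i/kT}$. Thus $G^T(\rho)$ is a nonincreasing probability density supported in $[0,Z]$. Relative mixedness. For nonincreasing integrable functions $f,g\ge 0$ on $[0,\infty)$, $$M(f\|g):=\max\Big\{m>0:\ \int_0^l f(x)\,dx\ge\int_0^{lm}g(x)\,dx\ \text{for all } l\ge 0\Big\}.$$ For $\varepsilon\in[0,1)$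 define $$W^\varepsilon(\rho\to\sigma):=kT\ln M\big(G^T(\rho)/(1-\varepsilon)\,\big\|\,G^T(\sigma)\big).$$ Smooth relative min-entropy. For commuting diagonal $\rho$ and $\sigma^T$ as in the claim, the (fractional) smooth relative entropy of order $0$ is $$D_0^\varepsilon(\rho\|\sigma^T):=-\log_2\min\Big\{\sum_i t_iA_i:\ t\in[0,1]^n,\ \sum_i t_iP_i\ge 1-\varepsilon\Big\}.$$ *)

theory Defs
  imports "HOL-Analysis.Analysis"
begin

text \<open>A state on levels 0..<n with (finite) energies E i and populations P i.
  kB is Boltzmann's constant, T the temperature.\<close>

definition block_width :: "real \<Rightarrow> real \<Rightarrow> (nat \<Rightarrow> real) \<Rightarrow> nat \<Rightarrow> real" where
  "block_width kB T E i = exp (- E i / (kB * T))"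

definition block_height :: "real \<Rightarrow> real \<Rightarrow> (nat \<Rightarrow> real) \<Rightarrow> (nat \<Rightarrow> real) \<Rightarrow> nat \<Rightarrow> real" where
  "block_height kB T E P i = P i * exp (E i / (kB * T))"

definition height_sorting :: "real \<Rightarrow> real \<Rightarrow> nat \<Rightarrow> (nat \<Rightarrow> real) \<Rightarrow> (nat \<Rightarrow> real) \<Rightarrow> (nat \<Rightarrow> nat) \<Rightarrow> bool" where
  "height_sorting kB T n E P \<pi> \<longleftrightarrow> \<pi> permutes {..<n} \<and>
     (\<forall>j1 j2. j1 \<le> j2 \<and> j2 < n \<longrightarrow> block_height kB T E P (\<pi> j2) \<le> block_height kB T E P (\<pi> j1))"

text \<open>Gibbs rescaling G^T(rho): blocks placed consecutively from 0 in nonincreasing height,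
  block j occupying [S j, S (j+1)), function 0 beyond Z.\<close>
definition gibbs_rescaling :: "real \<Rightarrow> real \<Rightarrow> nat \<Rightarrow> (nat \<Rightarrow> real) \<Rightarrow> (nat \<Rightarrow> real) \<Rightarrow> real \<Rightarrow> real" where
  "gibbs_rescaling kB T n E P x =
     (let \<pi> = (SOME \<pi>. height_sorting kB T n E P \<pi>);
          S = (\<lambda>j. \<Sum>m<j. block_width kB T E (\<pi> m))
      in \<Sum>j<n. if S j \<le> x \<and> x < S (Suc j) then block_height kB T E P (\<pi> j) else 0)"

definition rel_mixedness :: "(real \<Rightarrow> real) \<Rightarrow> (real \<Rightarrow> real) \<Rightarrow> real" where
  "rel_mixedness f g = (GREATEST m. m > 0 \<and>
     (\<forall>l\<ge>0. integral {0..l} f \<ge> integral {0..l * m} g))"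

definition work_eps :: "real \<Rightarrow> real \<Rightarrow> real \<Rightarrow> nat \<Rightarrow> (nat \<Rightarrow> real) \<Rightarrow> (nat \<Rightarrow> real) \<Rightarrow> (nat \<Rightarrow> real) \<Rightarrow> real" where
  "work_eps kB T \<epsilon> n E P Q =
     kB * T * ln (rel_mixedness (\<lambda>x. gibbs_rescaling kB T n E P x / (1 - \<epsilon>))
                                (gibbs_rescaling kB T n E Q))"

text \<open>Fractional smooth relative min-entropy D_0^eps(rho||sigma) for commuting diagonal states
  with eigenvalues P i and A i.\<close>
definition D0_eps :: "real \<Rightarrow> nat \<Rightarrow> (nat \<Rightarrow> real) \<Rightarrow> (nat \<Rightarrow> real) \<Rightarrow> real" where
  "D0_eps \<epsilon> n P A = - log 2 (LEAST v. \<exists>t. (\<forall>i<n. 0 \<le> t i \<and> t i \<le> 1) \<and>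
        (\<Sum>i<n. t i * P i) \<ge> 1 - \<epsilon> \<and> v = (\<Sum>i<n. t i * A i))"

end

theory Submission
  imports Defs
begin
lemma sort_exists: "\<exists>\<pi>. height_sorting kB T n E P \<pi>"
proof -
  define f where "f = (\<lambda>i. - block_height kB T E P i)"
  define xs where "xs = sort_key f [0..<n]"
  have "mset xs = mset [0..<n]" by (simp add: xs_def)
  then obtain p where p: "p permutes {..<length [0..<n]}" "permute_list p [0..<n] = xs"
    by (rule mset_eq_permutation)
  have pn: "p permutes {..<n}" using p by simp
  have len: "length xs = n" using p(2) by auto
  have nth: "\<And>j. j < n \<Longrightarrow> xs ! j = p j"
  proof -
    fix j assume j: "j < n"
    have "p j < n" using permutes_in_image[OF pn] j by auto
    then show "xs ! j = p j" using p(2)[symmetric] p(1) j by (simp add: permute_list_nth)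
  qed
  have s: "sorted (map f xs)" by (simp add: xs_def)
  show ?thesis unfolding height_sorting_def
  proof (intro exI conjI allI impI)
    show "p permutes {..<n}" by (rule pn)
    fix j1 j2 assume a: "j1 \<le> j2 \<and> j2 < n"
    then have "(map f xs) ! j1 \<le> (map f xs) ! j2" using s len
      by (intro sorted_nth_mono) auto
    then have "f (xs ! j1) \<le> f (xs ! j2)" using a len by simp
    then show "block_height kB T E P (p j2) \<le> block_height kB T E P (p j1)"
      using nth a by (simp add: f_def)
  qed
qed

lemma block_integral:
  fixes a b l c :: real
  assumes "0 \<le> a" "a \<le> b" "0 \<le> l"
  shows "((\<lambda>x. if a \<le> x \<and> x < b then c else 0) has_integral c * (min l b - min l a)) {0..l}"
proof (cases "a \<le> l")
  case True
  define d where "d = min l b"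
  have ad: "a \<le> d" using True assms by (simp add: d_def)
  have "((\<lambda>x. c) has_integral c * (d - a)) {a..d}"
    using has_integral_const_real[of c a d] ad by (simp add: mult.commute)
  moreover have eq: "{a..d} \<inter> {0..l} = {a..d}"
    using assms ad by (auto simp: d_def)
  ultimately have ind: "((\<lambda>x. if x \<in> {a..d} then c else 0) has_integral c * (d - a)) {0..l}"
    unfolding has_integral_restrict_Int eq by simp
  have "((\<lambda>x. if a \<le> x \<and> x < b then c else 0) has_integral c * (d - a)) {0..l}"
    by (rule has_integral_spike_finite[where S="{d}", OF _ _ ind]) (auto simp: d_def)
  then show ?thesis using True by (simp add: d_def)
next
  case False
  have "((\<lambda>x. if a \<le> x \<and> x < b then c else 0) has_integral 0) {0..l}"
    by (rule has_integral_spike_finite[where S="{}", OF _ _ has_integral_0]) (use False in auto)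
  moreover have "min l b = l" using False assms by simp
  ultimately show ?thesis using False by simp
qed

lemma G_int:
  fixes d l :: real
  assumes pi: "\<pi> = (SOME \<pi>. height_sorting kB T n E Q \<pi>)"
    and S: "S = (\<lambda>j. \<Sum>m<j. block_width kB T E (\<pi> m))"
    and l: "0 \<le> l"
  shows "((\<lambda>x. gibbs_rescaling kB T n E Q x / d) has_integral
     (\<Sum>j<n. block_height kB T E Q (\<pi> j) / d * (min l (S (Suc j)) - min l (S j)))) {0..l}"
proof -
  have eq: "\<And>x. gibbs_rescaling kB T n E Q x / d =
     (\<Sum>j<n. if S j \<le> x \<and> x < S (Suc j) then block_height kB T E Q (\<pi> j) / d else 0)"
    unfolding gibbs_rescaling_def Let_def pi[symmetric] sum_divide_distrib
    by (rule sum.cong) (auto simp: S)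
  have Snn: "\<And>j. 0 \<le> S j" unfolding S block_width_def by (intro sum_nonneg) simp
  have Smono: "\<And>j. S j \<le> S (Suc j)" unfolding S block_width_def by simp
  show ?thesis unfolding eq
    by (intro has_integral_sum finite_lessThan block_integral Snn Smono l)
qed

lemma knapsack:
  fixes w p u :: "nat \<Rightarrow> real" and l :: real
  assumes w: "\<And>j. j < n \<Longrightarrow> 0 < w j"
    and p: "\<And>j. j < n \<Longrightarrow> 0 \<le> p j"
    and sorted: "\<And>j1 j2. j1 \<le> j2 \<Longrightarrow> j2 < n \<Longrightarrow> p j2 / w j2 \<le> p j1 / w j1"
    and S: "S = (\<lambda>j. \<Sum>m<j. w m)"
    and u: "\<And>j. j < n \<Longrightarrow> 0 \<le> u j \<and> u j \<le> 1"
    and l: "0 \<le> l"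
    and budget: "(\<Sum>j<n. u j * w j) \<le> min l (S n)"
  shows "(\<Sum>j<n. u j * p j) \<le> (\<Sum>j<n. p j * ((min l (S (Suc j)) - min l (S j)) / w j))"
proof -
  define \<tau> where "\<tau> = (\<lambda>j. (min l (S (Suc j)) - min l (S j)) / w j)"
  define h where "h = (\<lambda>j. p j / w j)"
  have SSuc: "\<And>j. S (Suc j) = S j + w j" by (simp add: S)
  have S0: "S 0 = 0" by (simp add: S)
  have Smono: "\<And>i j. i \<le> j \<Longrightarrow> j \<le> n \<Longrightarrow> S i \<le> S j"
    unfolding S by (rule sum_mono2) (auto intro!: less_imp_le[OF w])
  have tw: "(\<Sum>j<n. \<tau> j * w j) = min l (S n)"
  proof -
    have "(\<Sum>j<n. \<tau> j * w j) = (\<Sum>j<n. min l (S (Suc j)) - min l (S j))"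
      by (rule sum.cong) (auto simp: \<tau>_def dest: w)
    also have "\<dots> = min l (S n)" using sum_lessThan_telescope[of "\<lambda>j. min l (S j)" n] S0 l by simp
    finally show ?thesis .
  qed
  have tpos: "\<And>j. j < n \<Longrightarrow> 0 < \<tau> j \<Longrightarrow> S j < l"
  proof (rule ccontr)
    fix j assume j: "j < n" "0 < \<tau> j" "\<not> S j < l"
    then have "min l (S (Suc j)) = l" "min l (S j) = l" using SSuc w[OF j(1)] by auto
    then show False using j(2) by (simp add: \<tau>_def)
  qed
  have tlt: "\<And>j. j < n \<Longrightarrow> \<tau> j < 1 \<Longrightarrow> l < S (Suc j)"
  proof (rule ccontr)
    fix j assume j: "j < n" "\<tau> j < 1" "\<not> l < S (Suc j)"
    then have "min l (S (Suc j)) = S (Suc j)" "min l (S j) = S j" using SSuc w[OF j(1)] by auto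
    then show False using j(2) w[OF j(1)] by (simp add: \<tau>_def SSuc)
  qed
  define lam where "lam = (if \<exists>j<n. \<tau> j < 1 then h (LEAST j. j < n \<and> \<tau> j < 1) else 0)"
  have hnn: "\<And>j. j < n \<Longrightarrow> 0 \<le> h j" unfolding h_def using p w by (simp add: less_imp_le)
  have cA: "\<And>j. j < n \<Longrightarrow> \<tau> j < 1 \<Longrightarrow> h j \<le> lam"
  proof -
    fix j assume j: "j < n" "\<tau> j < 1"
    define j0 where "j0 = (LEAST j. j < n \<and> \<tau> j < 1)"
    have "j0 \<le> j" unfolding j0_def using j by (intro Least_le) simp
    then have "h j \<le> h j0" unfolding h_def using sorted j by simp
    then show "h j \<le> lam" using j unfolding lam_def j0_def by auto
  qed
  have cB: "\<And>j. j < n \<Longrightarrow> 0 < \<tau> j \<Longrightarrow> lam \<le> h j"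
  proof -
    fix j assume j: "j < n" "0 < \<tau> j"
    show "lam \<le> h j"
    proof (cases "\<exists>j<n. \<tau> j < 1")
      case False then show ?thesis using hnn j by (auto simp add: lam_def)
    next
      case True
      define j0 where "j0 = (LEAST j. j < n \<and> \<tau> j < 1)"
      have j0: "j0 < n \<and> \<tau> j0 < 1" unfolding j0_def using True by (rule LeastI_ex)
      have "j \<le> j0"
      proof (rule ccontr)
        assume "\<not> j \<le> j0"
        then have "S (Suc j0) \<le> S j" using j by (intro Smono) auto
        moreover have "l < S (Suc j0)" using tlt j0 by blast
        moreover have "S j < l" using tpos j by blast
        ultimately show False by simp
      qed
      then have "h j0 \<le> h j" unfolding h_def using sorted j0 by simp
      then show ?thesis using True unfolding lam_def j0_def by simp
    qed
  qed
  have lnn: "0 \<le> lam" unfolding lam_def using hnn by (auto intro: LeastI2_ex)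
  have termw: "\<And>j. j < n \<Longrightarrow> (u j - \<tau> j) * p j \<le> lam * ((u j - \<tau> j) * w j)"
  proof -
    fix j assume j: "j < n"
    have pw: "p j = h j * w j" unfolding h_def using w[OF j] by simp
    have "(u j - \<tau> j) * (h j - lam) \<le> 0"
    proof (cases "u j \<le> \<tau> j")
      case True
      show ?thesis
      proof (cases "u j = \<tau> j")
        case False
        then have "0 < \<tau> j" using True u[OF j] by linarith
        then show ?thesis using cB[OF j] True by (simp add: mult_nonpos_nonneg)
      qed simp
    next
      case False
      then have "\<tau> j < 1" using u[OF j] by linarith
      then show ?thesis using cA[OF j] False by (simp add: mult_nonneg_nonpos)
    qed
    then have "(u j - \<tau> j) * (h j - lam) * w j \<le> 0" using w[OF j] by (simp add: mult_nonpos_nonneg)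
    then show "(u j - \<tau> j) * p j \<le> lam * ((u j - \<tau> j) * w j)" unfolding pw by (simp add: algebra_simps)
  qed
  have "(\<Sum>j<n. u j * p j) - (\<Sum>j<n. p j * \<tau> j) = (\<Sum>j<n. (u j - \<tau> j) * p j)"
    by (simp add: sum_subtractf algebra_simps)
  also have "\<dots> \<le> (\<Sum>j<n. lam * ((u j - \<tau> j) * w j))" by (intro sum_mono termw) simp
  also have "\<dots> = lam * ((\<Sum>j<n. u j * w j) - (\<Sum>j<n. \<tau> j * w j))"
    by (simp add: sum_distrib_left sum_subtractf algebra_simps)
  also have "\<dots> \<le> 0" using tw budget lnn by (simp add: mult_nonneg_nonpos)
  finally show ?thesis unfolding \<tau>_def by simp
qed

theorem mainTheorem7:
  fixes kB T \<epsilon> :: real and n :: nat and E P :: "nat \<Rightarrow> real"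
  assumes "kB > 0" and "T > 0"
    and "n \<ge> 1"
    and "\<forall>i<n. P i \<ge> 0" and "(\<Sum>i<n. P i) = 1"
    and "0 \<le> \<epsilon>" and "\<epsilon> < 1"
  shows "let Z = (\<Sum>i<n. exp (- E i / (kB * T)));
             A = (\<lambda>i. exp (- E i / (kB * T)) / Z)
         in work_eps kB T \<epsilon> n E P A = kB * T * ln 2 * D0_eps \<epsilon> n P A"
proof -
  note Pnn = assms(4)[rule_format]
  define K where "K = kB * T"
  have K: "0 < K" using assms(1,2) by (simp add: K_def)
  define w where "w = block_width kB T E"
  have w_eq: "\<And>i. w i = exp (- E i / (kB * T))" by (simp add: w_def block_width_def)
  have wpos: "\<And>i. 0 < w i" by (simp add: w_eq)
  define Z where "Z = (\<Sum>i<n. exp (- E i / (kB * T)))"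
  define A where "A = (\<lambda>i. exp (- E i / (kB * T)) / Z)"
  have Zw: "Z = (\<Sum>i<n. w i)" by (simp add: Z_def w_eq)
  have ne: "{..<n} \<noteq> {}" using assms(3) lessThan_empty_iff by (metis not_one_le_zero)
  have Zpos: "0 < Z" unfolding Zw using ne wpos
    by (intro sum_pos) auto
  have hP: "\<And>i. block_height kB T E P i = P i / w i"
    by (simp add: block_height_def w_eq exp_minus field_simps)
  have hA: "\<And>i. block_height kB T E A i = 1 / Z"
    using Zpos by (simp add: block_height_def A_def exp_minus field_simps)
  have Aw: "\<And>i. A i = w i / Z" by (simp add: A_def w_eq)
  define \<pi> where "\<pi> = (SOME \<pi>. height_sorting kB T n E P \<pi>)"
  have hs: "height_sorting kB T n E P \<pi>" unfolding \<pi>_def using sort_exists by (rule someI_ex)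
  have perm: "\<pi> permutes {..<n}" using hs by (simp add: height_sorting_def)
  have sortP: "\<And>j1 j2. j1 \<le> j2 \<Longrightarrow> j2 < n \<Longrightarrow> P (\<pi> j2) / w (\<pi> j2) \<le> P (\<pi> j1) / w (\<pi> j1)"
    using hs by (simp add: height_sorting_def hP)
  define \<pi>A where "\<pi>A = (SOME \<pi>. height_sorting kB T n E A \<pi>)"
  have hsA: "height_sorting kB T n E A \<pi>A" unfolding \<pi>A_def using sort_exists by (rule someI_ex)
  have permA: "\<pi>A permutes {..<n}" using hsA by (simp add: height_sorting_def)
  define S where "S = (\<lambda>j. \<Sum>m<j. block_width kB T E (\<pi> m))"
  define SA where "SA = (\<lambda>j. \<Sum>m<j. block_width kB T E (\<pi>A m))"
  have S': "S = (\<lambda>j. \<Sum>m<j. w (\<pi> m))" by (simp add: S_def w_def)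
  have Sn: "S n = Z" unfolding S' Zw using sum.permute[OF perm, of w] by (simp add: comp_def)
  have SAn: "SA n = Z" unfolding SA_def Zw w_def using sum.permute[OF permA, of w] by (simp add: comp_def w_def)
  have S0: "S 0 = 0" by (simp add: S')
  have SSuc: "\<And>j. S (Suc j) = S j + w (\<pi> j)" by (simp add: S')
  have Snn: "\<And>j. 0 \<le> S j" unfolding S' by (intro sum_nonneg) (simp add: less_imp_le wpos)
  have Smono: "\<And>i j. i \<le> j \<Longrightarrow> S i \<le> S j"
    unfolding S' by (rule sum_mono2) (auto simp: less_imp_le wpos)
  define \<tau> where "\<tau> = (\<lambda>l j. (min l (S (Suc j)) - min l (S j)) / w (\<pi> j))"
  define F where "F = (\<lambda>l. \<Sum>j<n. P (\<pi> j) * \<tau> l j)"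
  have \<tau>01: "\<And>l j. 0 \<le> \<tau> l j \<and> \<tau> l j \<le> 1"
  proof -
    fix l j
    have "0 \<le> min l (S (Suc j)) - min l (S j)" "min l (S (Suc j)) - min l (S j) \<le> w (\<pi> j)"
      using SSuc[of j] wpos[of "\<pi> j"] by (auto simp: min_def)
    then show "0 \<le> \<tau> l j \<and> \<tau> l j \<le> 1" using wpos[of "\<pi> j"] by (simp add: \<tau>_def divide_le_eq_1)
  qed
  have \<tau>w: "\<And>l. 0 \<le> l \<Longrightarrow> (\<Sum>j<n. \<tau> l j * w (\<pi> j)) = min l Z"
  proof -
    fix l :: real assume l: "0 \<le> l"
    have "(\<Sum>j<n. \<tau> l j * w (\<pi> j)) = (\<Sum>j<n. min l (S (Suc j)) - min l (S j))"
      by (rule sum.cong) (auto simp: \<tau>_def wpos less_imp_neq[OF wpos, symmetric])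
    also have "\<dots> = min l Z" using sum_lessThan_telescope[of "\<lambda>j. min l (S j)" n] S0 l Sn by simp
    finally show "(\<Sum>j<n. \<tau> l j * w (\<pi> j)) = min l Z" .
  qed
  have sumP: "\<And>t. (\<Sum>i<n. t i * P i) = (\<Sum>j<n. t (\<pi> j) * P (\<pi> j))"
    using sum.permute[OF perm] by (simp add: comp_def)
  have sumA: "\<And>t. (\<Sum>i<n. t i * A i) = (\<Sum>j<n. t (\<pi> j) * w (\<pi> j)) / Z"
    using sum.permute[OF perm] by (simp add: comp_def Aw sum_divide_distrib)
  have KS: "\<And>u l. (\<And>j. j < n \<Longrightarrow> 0 \<le> u j \<and> u j \<le> 1) \<Longrightarrow> 0 \<le> l \<Longrightarrow>
      (\<Sum>j<n. u j * w (\<pi> j)) \<le> min l Z \<Longrightarrow> (\<Sum>j<n. u j * P (\<pi> j)) \<le> F l"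
  proof -
    fix u l assume u: "\<And>j. j < n \<Longrightarrow> 0 \<le> u j \<and> u j \<le> 1" and l: "0 \<le> l"
      and b: "(\<Sum>j<n. u j * w (\<pi> j)) \<le> min l Z"
    have "(\<Sum>j<n. u j * P (\<pi> j)) \<le> (\<Sum>j<n. P (\<pi> j) * ((min l (S (Suc j)) - min l (S j)) / w (\<pi> j)))"
    proof (rule knapsack[where S=S])
      fix j assume "j < n"
      then have "\<pi> j < n" using permutes_in_image[OF perm] by simp
      then show "0 \<le> P (\<pi> j)" using Pnn by simp
    qed (use wpos sortP S' u l b Sn in auto)
    then show "(\<Sum>j<n. u j * P (\<pi> j)) \<le> F l" by (simp add: F_def \<tau>_def)
  qed
  have F0: "F 0 = 0" using Snn by (simp add: F_def \<tau>_def)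
  have FZ: "F Z = 1"
  proof -
    have "\<And>j. j < n \<Longrightarrow> \<tau> Z j = 1"
    proof -
      fix j assume j: "j < n"
      have "S (Suc j) \<le> Z" using Smono[of "Suc j" n] j Sn by simp
      then have "min Z (S (Suc j)) = S (Suc j)" "min Z (S j) = S j" using SSuc[of j] wpos[of "\<pi> j"] by auto
      then show "\<tau> Z j = 1" using wpos[of "\<pi> j"] by (simp add: \<tau>_def SSuc)
    qed
    then have "F Z = (\<Sum>j<n. P (\<pi> j))" by (simp add: F_def)
    also have "\<dots> = 1" using sum.permute[OF perm, of P] assms(5) by (simp add: comp_def)
    finally show ?thesis .
  qed
  have Fcont: "continuous_on UNIV F" unfolding F_def \<tau>_def by (intro continuous_intros) (simp add: less_imp_neq[OF wpos, symmetric])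
  define Set where "Set = {l. 0 \<le> l \<and> l \<le> Z \<and> 1 - \<epsilon> \<le> F l}"
  have Z_in: "Z \<in> Set" using Zpos FZ assms(6) by (simp add: Set_def)
  have bdd: "bdd_below Set" unfolding Set_def by (rule bdd_belowI[of _ 0]) auto
  have closedS: "closed Set"
  proof -
    have "Set = {0..Z} \<inter> {l. 1 - \<epsilon> \<le> F l}" by (auto simp: Set_def)
    moreover have "closed {l. 1 - \<epsilon> \<le> F l}"
      by (rule closed_Collect_le) (auto intro: continuous_on_const Fcont)
    ultimately show ?thesis by (simp add: closed_Int)
  qed
  define L where "L = Inf Set"
  have L_in: "L \<in> Set" unfolding L_def using Z_in bdd closedS by (intro closed_contains_Inf) auto
  have L_le: "\<And>l. l \<in> Set \<Longrightarrow> L \<le> l" unfolding L_def using bdd by (intro cInf_lower)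
  have FL: "1 - \<epsilon> \<le> F L" and LZ: "L \<le> Z" and L0: "0 \<le> L" using L_in by (auto simp: Set_def)
  have Lpos: "0 < L"
  proof (rule ccontr)
    assume "\<not> 0 < L" then have "L = 0" using L0 by simp
    then show False using FL F0 assms(7) by simp
  qed
  have Pin: "\<And>j. j < n \<Longrightarrow> \<pi> j < n" using permutes_in_image[OF perm] by simp
  have sumw: "(\<Sum>j<n. w (\<pi> j)) = Z" unfolding Zw using sum.permute[OF perm, of w] by (simp add: comp_def)
  have least: "(LEAST v. \<exists>t. (\<forall>i<n. 0 \<le> t i \<and> t i \<le> 1) \<and>
        (\<Sum>i<n. t i * P i) \<ge> 1 - \<epsilon> \<and> v = (\<Sum>i<n. t i * A i)) = L / Z"
  proof (rule Least_equality)
    define tL where "tL = (\<lambda>i. \<tau> L (inv \<pi> i))"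
    have tLpi: "\<And>j. tL (\<pi> j) = \<tau> L j" unfolding tL_def using permutes_inverses(2)[OF perm] by simp
    show "\<exists>t. (\<forall>i<n. 0 \<le> t i \<and> t i \<le> 1) \<and> (\<Sum>i<n. t i * P i) \<ge> 1 - \<epsilon> \<and> L / Z = (\<Sum>i<n. t i * A i)"
    proof (intro exI conjI allI impI)
      fix i show "0 \<le> tL i" "tL i \<le> 1" using \<tau>01 by (auto simp: tL_def)
    next
      have "(\<Sum>i<n. tL i * P i) = F L" unfolding sumP tLpi F_def by (simp add: mult.commute)
      then show "1 - \<epsilon> \<le> (\<Sum>i<n. tL i * P i)" using FL by simp
    next
      show "L / Z = (\<Sum>i<n. tL i * A i)" unfolding sumA tLpi using \<tau>w[OF L0] LZ by simp
    qed
  next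
    fix v assume "\<exists>t. (\<forall>i<n. 0 \<le> t i \<and> t i \<le> 1) \<and> (\<Sum>i<n. t i * P i) \<ge> 1 - \<epsilon> \<and> v = (\<Sum>i<n. t i * A i)"
    then obtain t where t01: "\<forall>i<n. 0 \<le> t i \<and> t i \<le> 1" and tP: "(\<Sum>i<n. t i * P i) \<ge> 1 - \<epsilon>"
      and v: "v = (\<Sum>i<n. t i * A i)" by blast
    define u where "u = (\<lambda>j. t (\<pi> j))"
    have u01: "\<And>j. j < n \<Longrightarrow> 0 \<le> u j \<and> u j \<le> 1" using t01 Pin by (simp add: u_def)
    define lv where "lv = (\<Sum>j<n. u j * w (\<pi> j))"
    have lv0: "0 \<le> lv" unfolding lv_def using u01 wpos by (intro sum_nonneg) (simp add: less_imp_le)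
    have lvZ: "lv \<le> Z" unfolding lv_def sumw[symmetric] using u01 wpos
      by (intro sum_mono) (simp add: mult_le_cancel_right1 less_imp_le)
    have "(\<Sum>j<n. u j * P (\<pi> j)) \<le> F lv" using u01 lv0 lvZ by (intro KS) (auto simp: lv_def)
    then have "lv \<in> Set" using tP lv0 lvZ unfolding Set_def sumP u_def by simp
    then have "L \<le> lv" by (rule L_le)
    moreover have "v = lv / Z" unfolding v sumA lv_def u_def ..
    ultimately show "L / Z \<le> v" using Zpos by (simp add: divide_right_mono)
  qed
  have intf: "\<And>l. 0 \<le> l \<Longrightarrow> integral {0..l} (\<lambda>x. gibbs_rescaling kB T n E P x / (1 - \<epsilon>)) = F l / (1 - \<epsilon>)"
  proof -
    fix l :: real assume l: "0 \<le> l"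
    have "integral {0..l} (\<lambda>x. gibbs_rescaling kB T n E P x / (1 - \<epsilon>)) =
       (\<Sum>j<n. block_height kB T E P (\<pi> j) / (1 - \<epsilon>) * (min l (S (Suc j)) - min l (S j)))"
      by (rule integral_unique[OF G_int[OF \<pi>_def S_def l]])
    also have "\<dots> = F l / (1 - \<epsilon>)" unfolding F_def \<tau>_def sum_divide_distrib hP
      by (rule sum.cong) auto
    finally show "integral {0..l} (\<lambda>x. gibbs_rescaling kB T n E P x / (1 - \<epsilon>)) = F l / (1 - \<epsilon>)" .
  qed
  have intg: "\<And>y. 0 \<le> y \<Longrightarrow> integral {0..y} (gibbs_rescaling kB T n E A) = min y Z / Z"
  proof -
    fix y :: real assume y: "0 \<le> y"
    have "integral {0..y} (\<lambda>x. gibbs_rescaling kB T n E A x / 1) =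
       (\<Sum>j<n. block_height kB T E A (\<pi>A j) / 1 * (min y (SA (Suc j)) - min y (SA j)))"
      by (rule integral_unique[OF G_int[OF \<pi>A_def SA_def y]])
    also have "\<dots> = (\<Sum>j<n. min y (SA (Suc j)) - min y (SA j)) / Z" unfolding hA sum_divide_distrib
      by simp
    also have "\<dots> = min y Z / Z" using sum_lessThan_telescope[of "\<lambda>j. min y (SA j)" n] y SAn
      by (simp add: SA_def)
    finally show "integral {0..y} (gibbs_rescaling kB T n E A) = min y Z / Z" by simp
  qed
  have greatest: "rel_mixedness (\<lambda>x. gibbs_rescaling kB T n E P x / (1 - \<epsilon>)) (gibbs_rescaling kB T n E A) = Z / L"
    unfolding rel_mixedness_def
  proof (rule Greatest_equality)
    show "Z / L > 0 \<and> (\<forall>l\<ge>0. integral {0..l} (\<lambda>x. gibbs_rescaling kB T n E P x / (1 - \<epsilon>))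
        \<ge> integral {0..l * (Z / L)} (gibbs_rescaling kB T n E A))"
    proof (intro conjI allI impI)
      show "Z / L > 0" using Zpos Lpos by simp
      fix l :: real assume l: "0 \<le> l"
      define s where "s = min (l * (Z / L)) Z / Z"
      have s0: "0 \<le> s" and s1: "s \<le> 1" using l Zpos Lpos by (auto simp: s_def)
      have sL: "s * L \<le> l" using Zpos Lpos l by (auto simp: s_def field_simps min_def)
      have "(\<Sum>j<n. (s * \<tau> L j) * P (\<pi> j)) \<le> F l"
      proof (rule KS)
        show "\<And>j. j < n \<Longrightarrow> 0 \<le> s * \<tau> L j \<and> s * \<tau> L j \<le> 1"
          using \<tau>01 s0 s1 by (simp add: mult_le_one)
        have "(\<Sum>j<n. s * \<tau> L j * w (\<pi> j)) = s * L"
          using \<tau>w[OF L0] LZ by (simp add: mult.assoc flip: sum_distrib_left)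
        moreover have "s * L \<le> Z" using s1 LZ L0 Zpos by (meson mult_left_le_one_le order_trans s0)
        ultimately show "(\<Sum>j<n. s * \<tau> L j * w (\<pi> j)) \<le> min l Z" using sL by simp
      qed (rule l)
      moreover have "(\<Sum>j<n. (s * \<tau> L j) * P (\<pi> j)) = s * F L"
        by (simp add: F_def sum_distrib_left algebra_simps)
      moreover have "s * (1 - \<epsilon>) \<le> s * F L" using FL s0 by (rule mult_left_mono)
      ultimately have "s * (1 - \<epsilon>) \<le> F l" by linarith
      then have "s \<le> F l / (1 - \<epsilon>)" using assms(7) by (simp add: pos_le_divide_eq)
      then show "integral {0..l} (\<lambda>x. gibbs_rescaling kB T n E P x / (1 - \<epsilon>))
        \<ge> integral {0..l * (Z / L)} (gibbs_rescaling kB T n E A)"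
      proof -
        have "0 \<le> l * (Z / L)" using l Zpos Lpos by simp
        then have e2: "integral {0..l * (Z / L)} (gibbs_rescaling kB T n E A) = s"
          unfolding s_def by (rule intg)
        show ?thesis unfolding intf[OF l] e2 by fact
      qed
    qed
  next
    fix m assume m: "m > 0 \<and> (\<forall>l\<ge>0. integral {0..l} (\<lambda>x. gibbs_rescaling kB T n E P x / (1 - \<epsilon>))
        \<ge> integral {0..l * m} (gibbs_rescaling kB T n E A))"
    have Zm: "0 \<le> Z / m" using m Zpos by simp
    have "integral {0..Z / m * m} (gibbs_rescaling kB T n E A) \<le> F (Z / m) / (1 - \<epsilon>)"
      using m Zm intf[OF Zm] by auto
    moreover have "integral {0..Z / m * m} (gibbs_rescaling kB T n E A) = 1"
      using intg[of "Z / m * m"] m Zpos by simp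
    ultimately have "1 - \<epsilon> \<le> F (Z / m)" using assms(7) by (simp add: le_divide_eq)
    show "m \<le> Z / L"
    proof (cases "Z / m \<le> Z")
      case True
      then have "Z / m \<in> Set" using \<open>1 - \<epsilon> \<le> F (Z / m)\<close> Zm by (simp add: Set_def)
      then have "L \<le> Z / m" by (rule L_le)
      then show ?thesis using m Lpos by (simp add: field_simps)
    next
      case False
      then have "m < 1" using m Zpos by (simp add: field_simps)
      moreover have "1 \<le> Z / L" using LZ Lpos by simp
      ultimately show ?thesis by simp
    qed
  qed
  have W: "work_eps kB T \<epsilon> n E P A = K * ln (Z / L)" by (simp add: work_eps_def greatest K_def)
  have D: "D0_eps \<epsilon> n P A = - log 2 (L / Z)" by (simp add: D0_eps_def least)
  have main: "work_eps kB T \<epsilon> n E P A = kB * T * ln 2 * D0_eps \<epsilon> n P A"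
  proof -
    have l2: "ln 2 * log 2 (L / Z) = ln (L / Z)" by (simp add: log_def)
    have "ln (Z / L) = - ln (L / Z)" using Lpos Zpos by (simp add: ln_div)
    then show ?thesis unfolding W D K_def[symmetric] using l2
      by (metis minus_mult_right mult.assoc)
  qed
  show ?thesis unfolding Let_def Z_def[symmetric] A_def[symmetric] by (rule main)
qed
end
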